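(* Let $\epsilon>0$ and let $H$ be a $3$-graph on $n$ vertices. Then there exists a sub-$3$-graph $H_\epsilon$ of $H$ (with $V(H_\epsilon)\subseteq V(H)$ and $E(H_\epsilon)\subseteq E(H)$) such that (i) $|V(H)\setminus V(H_\epsilon)|\le 3\epsilon n$; (ii) $\deg_{H_\epsilon}(v)\ge \deg_H(v)-7\epsilon\binom n2$ for every $v\in V(H_\epsilon)$; (iii) $\deg_H(S)>\epsilon^2 n$ for every pair $S\in\partial H_\epsilon$.
   Context: For a $3$-graph $H$ and a set $S$ of one or two vertices, $\deg_H(S)$ is the number of edges of $H$ containing $S$ (for a vertex $v$, $\deg_H(v)=\deg_H(\{v\})$). The shadow $\partial G$ of a $3$-graph $G$ is the set of pairs of vertices contained in at least one edge of $G$. *)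

theory Defs
  imports Complex_Main
begin

definition is_3graph :: "'a set \<Rightarrow> 'a set set \<Rightarrow> bool" where
  "is_3graph V E \<longleftrightarrow> (\<forall>e\<in>E. e \<subseteq> V \<and> card e = 3)"

text \<open>Number of edges containing the vertex set S (S a vertex or a pair).\<close>
definition deg :: "'a set set \<Rightarrow> 'a set \<Rightarrow> nat" where
  "deg E S = card {e \<in> E. S \<subseteq> e}"

definition shadow :: "'a set set \<Rightarrow> 'a set set" where
  "shadow E = {S. card S = 2 \<and> (\<exists>e\<in>E. S \<subseteq> e)}"

end

theory Submission
  imports Defs
begin

lemma pair_edges_le:
  assumes fin: "finite V" and g: "is_3graph V E" and uv: "u \<in> V" "v \<in> V" "u \<noteq> v"
  shows "card {e\<in>E. {v,u} \<subseteq> e} \<le> card V - 2"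
proof -
  have "{e\<in>E. {v,u} \<subseteq> e} \<subseteq> (\<lambda>w. {v,u,w}) ` (V - {u,v})"
  proof
    fix e assume e: "e \<in> {e\<in>E. {v,u} \<subseteq> e}"
    then have ev: "e \<subseteq> V" "card e = 3" "{v,u} \<subseteq> e" using g unfolding is_3graph_def by auto
    have fe: "finite e" using ev(2) by (metis card.infinite zero_neq_numeral)
    have "card (e - {v,u}) = 1" using ev fe uv(3) by (simp add: card_Diff_subset)
    then obtain w where w: "e - {v,u} = {w}" by (auto simp: card_Suc_eq)
    then have "e = {v,u,w}" using ev(3) by auto
    moreover have "w \<in> V - {u,v}" using w ev(1) by auto
    ultimately show "e \<in> (\<lambda>w. {v,u,w}) ` (V - {u,v})" by blast
  qed
  then have "card {e\<in>E. {v,u} \<subseteq> e} \<le> card ((\<lambda>w. {v,u,w}) ` (V - {u,v}))"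
    using fin by (intro card_mono) auto
  also have "\<dots> \<le> card (V - {u,v})" using fin by (intro card_image_le) auto
  also have "\<dots> = card V - 2" using uv fin by (simp add: card_Diff_subset)
  finally show ?thesis .
qed

lemma choose2_real: "real (n choose 2) = real n * (real n - 1) / 2"
proof -
  have ev: "even (n * (n - 1))" by (cases "even n") auto
  have "2 * (n choose 2) = n * (n - 1)" unfolding choose_two using ev by (metis dvd_mult_div_cancel)
  then have "2 * real (n choose 2) = real n * real (n - 1)" by (metis of_nat_mult of_nat_numeral)
  then show ?thesis by (cases n) auto
qed

theorem lemma3p3:
  fixes V :: "'a set" and E :: "'a set set" and \<epsilon> :: real and n :: nat
  assumes "\<epsilon> > 0"
    and "finite V" and "card V = n"
    and "is_3graph V E"
  shows "\<exists>V' E'. V' \<subseteq> V \<and> E' \<subseteq> E \<and> is_3graph V' E'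
     \<and> real (card (V - V')) \<le> 3 * \<epsilon> * real n
     \<and> (\<forall>v\<in>V'. real (deg E' {v}) \<ge> real (deg E {v}) - 7 * \<epsilon> * real (n choose 2))
     \<and> (\<forall>S\<in>shadow E'. real (deg E S) > \<epsilon>^2 * real n)"
proof (cases "n < 2")
  case True
  have "E = {}"
  proof (rule ccontr)
    assume "E \<noteq> {}"
    then obtain e where "e \<in> E" by auto
    then have "e \<subseteq> V" "card e = 3" using assms(4) unfolding is_3graph_def by auto
    then have "3 \<le> card V" using assms(2) by (metis card_mono)
    then show False using True assms(3) by simp
  qed
  show ?thesis
    by (rule exI[of _ V], rule exI[of _ "{}"])
       (simp add: is_3graph_def deg_def shadow_def \<open>E = {}\<close> assms(1) less_imp_le)
next
  case False
  note eps = assms(1) and finV = assms(2) and cardV = assms(3) and g = assms(4)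
  have Esub: "E \<subseteq> Pow V" using g unfolding is_3graph_def by auto
  have finE: "finite E" using finV Esub finite_subset by blast
  define C where "C = real (n choose 2)"
  have Cpos: "C > 0" using False unfolding C_def by (simp add: choose2_real)
  define B where "B = {S. S \<subseteq> V \<and> card S = 2 \<and> real (deg E S) \<le> \<epsilon>^2 * real n}"
  define Eb where "Eb = {e\<in>E. \<exists>S\<in>B. S \<subseteq> e}"
  define bad where "bad v = {e\<in>Eb. v \<in> e}" for v
  define R where "R = {v\<in>V. real (card (bad v)) > \<epsilon> * C}"
  define V' where "V' = V - R"
  define E' where "E' = {e\<in>E - Eb. e \<subseteq> V'}"
  have finB: "finite B" using finV unfolding B_def by (auto intro: finite_subset[of _ "Pow V"])
  have finEb: "finite Eb" using finE unfolding Eb_def by auto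
  have cardB: "real (card B) \<le> C"
  proof -
    have "B \<subseteq> {S. S \<subseteq> V \<and> card S = 2}" unfolding B_def by auto
    then have "card B \<le> card {S. S \<subseteq> V \<and> card S = 2}" using finV by (intro card_mono) auto
    also have "\<dots> = n choose 2" using finV cardV by (simp add: n_subsets)
    finally show ?thesis unfolding C_def by simp
  qed
  have s1: "card Eb \<le> (\<Sum>S\<in>B. deg E S)"
  proof -
    have "Eb = (\<Union>S\<in>B. {e\<in>E. S \<subseteq> e})" unfolding Eb_def by auto
    then have "card Eb \<le> (\<Sum>S\<in>B. card {e\<in>E. S \<subseteq> e})" using finB by (simp add: card_UN_le)
    then show ?thesis unfolding deg_def .
  qed
  have s2: "(\<Sum>S\<in>B. real (deg E S)) \<le> real (card B) * (\<epsilon>^2 * real n)"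
    using sum_bounded_above[of B "\<lambda>S. real (deg E S)" "\<epsilon>^2 * real n"] unfolding B_def by auto
  have s3: "real (card Eb) \<le> C * (\<epsilon>^2 * real n)"
  proof -
    have "real (card Eb) \<le> (\<Sum>S\<in>B. real (deg E S))" using s1 by (metis of_nat_le_iff of_nat_sum)
    also have "\<dots> \<le> real (card B) * (\<epsilon>^2 * real n)" by (rule s2)
    also have "\<dots> \<le> C * (\<epsilon>^2 * real n)" using cardB by (intro mult_right_mono) auto
    finally show ?thesis .
  qed
  have s4: "(\<Sum>v\<in>V. card (bad v)) = 3 * card Eb"
  proof -
    have "(\<Sum>v\<in>V. card (bad v)) = (\<Sum>v\<in>V. \<Sum>e\<in>Eb. if v \<in> e then 1 else 0)"
      unfolding bad_def using finEb by (simp add: sum.If_cases Int_def)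
    also have "\<dots> = (\<Sum>e\<in>Eb. \<Sum>v\<in>V. if v \<in> e then 1 else 0)" by (rule sum.swap)
    also have "\<dots> = (\<Sum>e\<in>Eb. 3)"
    proof (rule sum.cong)
      fix e assume "e \<in> Eb"
      then have "e \<subseteq> V" "card e = 3" using g unfolding Eb_def is_3graph_def by auto
      then have "{v\<in>V. v \<in> e} = e" by auto
      then show "(\<Sum>v\<in>V. if v \<in> e then 1 else 0) = (3::nat)"
        using finV \<open>card e = 3\<close> by (simp add: sum.If_cases Int_def)
    qed simp
    finally show ?thesis by simp
  qed
  have cardR: "real (card R) \<le> 3 * \<epsilon> * real n"
  proof -
    have finR: "finite R" using finV unfolding R_def by auto
    have "\<epsilon> * C * real (card R) \<le> (\<Sum>v\<in>R. real (card (bad v)))"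
      using sum_bounded_below[of R "\<epsilon> * C" "\<lambda>v. real (card (bad v))"] unfolding R_def
      by (auto simp: less_imp_le mult.commute)
    also have "\<dots> \<le> (\<Sum>v\<in>V. real (card (bad v)))"
      using finV by (intro sum_mono2) (auto simp: R_def)
    also have "\<dots> = 3 * real (card Eb)" using s4 by (metis of_nat_sum of_nat_mult of_nat_numeral)
    also have "\<dots> \<le> 3 * (C * (\<epsilon>^2 * real n))" using s3 by simp
    also have "\<dots> = (\<epsilon> * C) * (3 * \<epsilon> * real n)" by (simp add: power2_eq_square)
    finally show ?thesis using Cpos eps by (simp add: mult_le_cancel_left_pos)
  qed
  show ?thesis
  proof (rule exI[of _ V'], rule exI[of _ E'], intro conjI)
    show "V' \<subseteq> V" unfolding V'_def by auto
    show "E' \<subseteq> E" unfolding E'_def by auto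
    show "is_3graph V' E'" using g unfolding E'_def is_3graph_def by auto
    show "real (card (V - V')) \<le> 3 * \<epsilon> * real n"
      using cardR unfolding V'_def R_def by (simp add: Diff_Diff_Int Int_absorb1 Int_commute)
    show "\<forall>S\<in>shadow E'. real (deg E S) > \<epsilon>^2 * real n"
    proof
      fix S assume "S \<in> shadow E'"
      then obtain e where S: "card S = 2" "e \<in> E'" "S \<subseteq> e" unfolding shadow_def by auto
      then have "e \<subseteq> V" "e \<notin> Eb" "e \<in> E" unfolding E'_def V'_def by auto
      then have "S \<notin> B" using S unfolding Eb_def by auto
      then show "real (deg E S) > \<epsilon>^2 * real n" using S \<open>e \<subseteq> V\<close> unfolding B_def by auto
    qed
    show "\<forall>v\<in>V'. real (deg E' {v}) \<ge> real (deg E {v}) - 7 * \<epsilon> * real (n choose 2)"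
    proof
      fix v assume v: "v \<in> V'"
      have "{e\<in>E. {v} \<subseteq> e} \<subseteq> {e\<in>E'. {v} \<subseteq> e} \<union> bad v \<union> (\<Union>u\<in>R. {e\<in>E. {v,u} \<subseteq> e})"
      proof
        fix e assume e: "e \<in> {e\<in>E. {v} \<subseteq> e}"
        show "e \<in> {e\<in>E'. {v} \<subseteq> e} \<union> bad v \<union> (\<Union>u\<in>R. {e\<in>E. {v,u} \<subseteq> e})"
        proof (cases "e \<in> Eb")
          case True then show ?thesis using e unfolding bad_def by auto
        next
          case nb: False
          show ?thesis
          proof (cases "e \<subseteq> V'")
            case True then show ?thesis using e nb unfolding E'_def by auto
          next
            case False
            then obtain u where "u \<in> e" "u \<notin> V'" by auto
            moreover have "e \<subseteq> V" using e g unfolding is_3graph_def by auto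
            ultimately have "u \<in> R" unfolding V'_def by auto
            then show ?thesis using e \<open>u \<in> e\<close> by auto
          qed
        qed
      qed
      then have "card {e\<in>E. {v} \<subseteq> e} \<le> card ({e\<in>E'. {v} \<subseteq> e} \<union> bad v \<union> (\<Union>u\<in>R. {e\<in>E. {v,u} \<subseteq> e}))"
        using finE by (intro card_mono finite_subset[OF _ finE]) (auto simp: E'_def bad_def Eb_def)
      also have "\<dots> \<le> card {e\<in>E'. {v} \<subseteq> e} + card (bad v) + card (\<Union>u\<in>R. {e\<in>E. {v,u} \<subseteq> e})"
        by (meson add_mono card_Un_le le_refl order_trans)
      also have "card (\<Union>u\<in>R. {e\<in>E. {v,u} \<subseteq> e}) \<le> (\<Sum>u\<in>R. card {e\<in>E. {v,u} \<subseteq> e})"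
        using finV by (intro card_UN_le) (auto simp: R_def)
      also have "\<dots> \<le> (\<Sum>u\<in>R. n - 2)"
      proof (rule sum_mono)
        fix u assume u: "u \<in> R"
        then have "u \<in> V" "v \<in> V" "u \<noteq> v" using v unfolding R_def V'_def by auto
        from pair_edges_le[OF finV g this] show "card {e\<in>E. {v,u} \<subseteq> e} \<le> n - 2" using cardV by simp
      qed
      finally have d: "deg E {v} \<le> deg E' {v} + card (bad v) + card R * (n - 2)"
        unfolding deg_def by simp
      have bv: "real (card (bad v)) \<le> \<epsilon> * C" using v unfolding V'_def R_def by auto
      have "real (card R * (n - 2)) = real (card R) * (real n - 2)" using False by simp
      also have "\<dots> \<le> (3 * \<epsilon> * real n) * (real n - 2)"
        using cardR False by (intro mult_right_mono) auto
      also have "\<dots> \<le> (3 * \<epsilon> * real n) * (real n - 1)"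
        using eps by (intro mult_left_mono) auto
      also have "\<dots> = 6 * \<epsilon> * C" unfolding C_def by (simp add: choose2_real)
      finally have rr: "real (card R * (n - 2)) \<le> 6 * \<epsilon> * C" .
      have "real (deg E {v}) \<le> real (deg E' {v}) + real (card (bad v)) + real (card R * (n - 2))"
        using d by (metis of_nat_add of_nat_le_iff)
      then show "real (deg E' {v}) \<ge> real (deg E {v}) - 7 * \<epsilon> * real (n choose 2)"
        using bv rr unfolding C_def by linarith
    qed
  qed
qed

end
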